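(* In the content-oblivious BFS algorithm $\mathcal{A}$ run with root $r$ on a connected graph $G$, for every $k\ge1$ such that the root performs at least $k$ invocations of Explore, the following hold at the end of the root's $k$-th invocation of Explore, regardless of message delays, delivery order and contents: - every node at distance exactly $k$ from $r$ has set its parent to a neighbour at distance $k-1$ from $r$, and has left state $\mathsf{INIT}$; - every node at distance greater than $k$ from $r$ is still in state $\mathsf{INIT}$.
   Context: Asynchronous model: there are no timing assumptions, and messages are not necessarily delivered in FIFO order. A node is asleep until it receives a message. On receiving one, it performs local computation, sends zero or more messages to neighbours, and goes back to sleep. Each node knows $n$ and its neighbour set $\mathcal{N}_u$. Algorithm $\mathcal{A}$ (content-oblivious BFS). Nodes ignore the contents of all messages; decisions depend only on from which neighbour a message arrives. Every node $u$ has variables $\mathrm{state}_u\in\{\mathsf{INIT},\mathsf{IDLE},\mathsf{EXPLORE},\mathsf{DONE}\}$, $\mathrm{parent}_u$, $\mathrm{children}_u$ and $\mathrm{count}_u$. All nodes start in $\mathsf{INIT}$. The root $r$ sets $\mathrm{parent}_r=\bot$, $\mathrm{children}_r=\mathcal{N}_r$, $\mathrm{count}_r=0$ and $\mathrm{state}_r=\mathsf{IDLE}$. It then repeatedly invokes Explore until $\mathrm{state}_r=\mathsf{DONE}$. The nodes handle incoming messages as follows. (i) SetParent: a node $u$ in $\mathsf{INIT}$ that receives a message from $v$ sets $\mathrm{parent}_u=v$, $\mathrm{children}_u=\mathcal{N}_u\setminus\{v\}$, $\mathrm{count}_u=0$ and $\mathrm{state}_u=\mathsf{IDLE}$, and sends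 a message to $v$. (ii) MarkSibling: a node $u$ in $\mathsf{IDLE}$ or $\mathsf{DONE}$ that receives a message from some $v\neq\mathrm{parent}_u$ removes $v$ from $\mathrm{children}_u$ and sends a message to $v$. (iii) Explore: a node $u$ in $\mathsf{IDLE}$ that receives a message from $\mathrm{parent}_u$ (or the root, when it invokes Explore) proceeds as follows. - It sets $\mathrm{state}_u=\mathsf{EXPLORE}$ and increments $\mathrm{count}_u$. - Sequentially, for each $v\in\mathcal{N}_u\setminus\{\mathrm{parent}_u\}$, it sends a message to $v$ and waits until it receives a message from $v$. - If $\mathrm{count}_u=n-1$, it performs an extra "dummy" exploration: sequentially, for each $v\in\mathrm{children}_u$, it sends a message to $v$ and waits for a message from $v$. - It then sends a message to $\mathrm{parent}_u$; the root skips this step. - Finally it sets $\mathrm{state}_u=\mathsf{DONE}$ if $\mathrm{count}_u=n-1$, and $\mathrm{state}_u=\mathsf{IDLE}$ otherwise. *)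

theory Defs
  imports Main "HOL-Library.Multiset"
begin

definition nbrs :: "('v \<times> 'v) set \<Rightarrow> 'v \<Rightarrow> 'v set" where
  "nbrs E u = {v. (u, v) \<in> E}"

definition graph_dist :: "('v \<times> 'v) set \<Rightarrow> 'v \<Rightarrow> 'v \<Rightarrow> nat" where
  "graph_dist E u v = (LEAST k. (u, v) \<in> E ^^ k)"

definition connected_graph :: "'v set \<Rightarrow> ('v \<times> 'v) set \<Rightarrow> bool" where
  "connected_graph V E \<longleftrightarrow> finite V \<and> E \<subseteq> V \<times> V \<and> sym E \<and> irrefl E
     \<and> (\<forall>u\<in>V. \<forall>v\<in>V. (u, v) \<in> E\<^sup>*)"

datatype nstate = INIT | IDLE | EXPLORE | DONE

(* Local state of a node.  par = None encodes \<bottom>.  The fields todo / wait / dummy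
   are the program counter of the sequential Explore procedure:
   todo  = neighbours still to be visited in the current loop,
   wait  = Some v while waiting for a message from v,
   dummy = whether the extra dummy exploration loop has been started. *)
record 'v lstate =
  st    :: nstate
  par   :: "'v option"
  chl   :: "'v set"
  cnt   :: nat
  todo  :: "'v set"
  wait  :: "'v option"
  dummy :: bool

(* Global configuration: local states and the multiset of in-flight messages
   (sender, receiver); contents are irrelevant (content-oblivious). *)
record 'v config =
  loc  :: "'v \<Rightarrow> 'v lstate"
  msgs :: "('v \<times> 'v) multiset"

datatype 'v action =
    SetParent 'v 'v      (* delivery of message from v to u *)
  | MarkSibling 'v 'v
  | ExploreStart 'v 'v
  | RootStart 'v
  | SendNext 'v 'v
  | RecvReply 'v 'v
  | StartDummy 'v
  | Finish 'v            (* end of an invocation of Explore at a node *)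

definition init_config :: "('v \<times> 'v) set \<Rightarrow> 'v \<Rightarrow> 'v config" where
  "init_config E r =
     \<lparr> loc = (\<lambda>u. if u = r
                  then \<lparr>st = IDLE, par = None, chl = nbrs E r, cnt = 0, todo = {}, wait = None, dummy = False\<rparr>
                  else \<lparr>st = INIT, par = None, chl = {}, cnt = 0, todo = {}, wait = None, dummy = False\<rparr>),
       msgs = {#} \<rparr>"

(* One atomic step of the asynchronous system; any in-flight message may be
   delivered at any time (arbitrary delays / non-FIFO).  n = number of nodes. *)
inductive step :: "nat \<Rightarrow> ('v \<times> 'v) set \<Rightarrow> 'v \<Rightarrow> 'v config \<Rightarrow> 'v action \<Rightarrow> 'v config \<Rightarrow> bool"
  for n E r where
  set_parent:
    "\<lbrakk> (v, u) \<in># msgs c; st (loc c u) = INIT \<rbrakk> \<Longrightarrow>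
     step n E r c (SetParent v u)
       \<lparr> loc = (loc c)(u := \<lparr>st = IDLE, par = Some v, chl = nbrs E u - {v}, cnt = 0,
                              todo = {}, wait = None, dummy = False\<rparr>),
         msgs = msgs c - {#(v, u)#} + {#(u, v)#} \<rparr>"
| mark_sibling:
    "\<lbrakk> (v, u) \<in># msgs c; st (loc c u) = IDLE \<or> st (loc c u) = DONE; par (loc c u) \<noteq> Some v \<rbrakk> \<Longrightarrow>
     step n E r c (MarkSibling v u)
       \<lparr> loc = (loc c)(u := (loc c u)\<lparr>chl := chl (loc c u) - {v}\<rparr>),
         msgs = msgs c - {#(v, u)#} + {#(u, v)#} \<rparr>"
| explore_start:
    "\<lbrakk> (v, u) \<in># msgs c; st (loc c u) = IDLE; par (loc c u) = Some v \<rbrakk> \<Longrightarrow>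
     step n E r c (ExploreStart v u)
       \<lparr> loc = (loc c)(u := (loc c u)\<lparr>st := EXPLORE, cnt := Suc (cnt (loc c u)),
                                      todo := nbrs E u - {v}, wait := None, dummy := False\<rparr>),
         msgs = msgs c - {#(v, u)#} \<rparr>"
| root_start:
    "st (loc c r) = IDLE \<Longrightarrow>
     step n E r c (RootStart r)
       \<lparr> loc = (loc c)(r := (loc c r)\<lparr>st := EXPLORE, cnt := Suc (cnt (loc c r)),
                                      todo := nbrs E r, wait := None, dummy := False\<rparr>),
         msgs = msgs c \<rparr>"
| send_next:
    "\<lbrakk> st (loc c u) = EXPLORE; wait (loc c u) = None; v \<in> todo (loc c u) \<rbrakk> \<Longrightarrow>
     step n E r c (SendNext u v)
       \<lparr> loc = (loc c)(u := (loc c u)\<lparr>todo := todo (loc c u) - {v}, wait := Some v\<rparr>),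
         msgs = msgs c + {#(u, v)#} \<rparr>"
| recv_reply:
    "\<lbrakk> st (loc c u) = EXPLORE; wait (loc c u) = Some v; (v, u) \<in># msgs c \<rbrakk> \<Longrightarrow>
     step n E r c (RecvReply v u)
       \<lparr> loc = (loc c)(u := (loc c u)\<lparr>wait := None\<rparr>),
         msgs = msgs c - {#(v, u)#} \<rparr>"
| start_dummy:
    "\<lbrakk> st (loc c u) = EXPLORE; wait (loc c u) = None; todo (loc c u) = {};
       \<not> dummy (loc c u); cnt (loc c u) = n - 1 \<rbrakk> \<Longrightarrow>
     step n E r c (StartDummy u)
       \<lparr> loc = (loc c)(u := (loc c u)\<lparr>dummy := True, todo := chl (loc c u)\<rparr>),
         msgs = msgs c \<rparr>"
| finish:
    "\<lbrakk> st (loc c u) = EXPLORE; wait (loc c u) = None; todo (loc c u) = {};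
       dummy (loc c u) \<or> cnt (loc c u) \<noteq> n - 1 \<rbrakk> \<Longrightarrow>
     step n E r c (Finish u)
       \<lparr> loc = (loc c)(u := (loc c u)\<lparr>st := (if cnt (loc c u) = n - 1 then DONE else IDLE)\<rparr>),
         msgs = msgs c + (case par (loc c u) of None \<Rightarrow> {#} | Some p \<Rightarrow> {#(u, p)#}) \<rparr>"

(* run n E r c j : configuration c is reachable from the initial configuration by
   an execution in which the root has completed exactly j invocations of Explore. *)
inductive run :: "nat \<Rightarrow> ('v \<times> 'v) set \<Rightarrow> 'v \<Rightarrow> 'v config \<Rightarrow> nat \<Rightarrow> bool"
  for n E r where
  run_init: "run n E r (init_config E r) 0"
| run_step: "\<lbrakk> run n E r c j; step n E r c a c' \<rbrakk> \<Longrightarrow>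
             run n E r c' (if a = Finish r then Suc j else j)"

end

theory Submission
  imports Defs
begin

locale bfs =
  fixes V :: "'v set" and E :: "('v \<times> 'v) set" and r :: 'v
  assumes conn: "connected_graph V E" and rV: "r \<in> V"
begin

abbreviation dd where "dd \<equiv> graph_dist E r"

lemma finV: "finite V" and EV: "E \<subseteq> V \<times> V" and symE: "sym E" and irrE: "irrefl E"
  and reach: "\<And>u v. u \<in> V \<Longrightarrow> v \<in> V \<Longrightarrow> (u,v) \<in> E\<^sup>*"
  using conn by (auto simp: connected_graph_def)

lemma edgeV: "(u,w) \<in> E \<Longrightarrow> u \<in> V \<and> w \<in> V" using EV by auto

lemma edge_sym: "(u,w) \<in> E \<Longrightarrow> (w,u) \<in> E" using symE by (auto dest: symD)

lemma edge_neq: "(u,w) \<in> E \<Longrightarrow> u \<noteq> w" using irrE by (auto simp: irrefl_def)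

lemma dd_r[simp]: "dd r = 0"
  by (simp add: graph_dist_def)

lemma dd_path: "u \<in> V \<Longrightarrow> (r,u) \<in> E ^^ dd u"
proof -
  assume "u \<in> V"
  then have "\<exists>k. (r,u) \<in> E ^^ k" using reach rV rtrancl_power by blast
  then show ?thesis unfolding graph_dist_def by (rule LeastI_ex)
qed

lemma dd0: "u \<in> V \<Longrightarrow> dd u = 0 \<Longrightarrow> u = r"
proof -
  assume "u \<in> V" "dd u = 0"
  then have "(r,u) \<in> E ^^ 0" using dd_path by metis
  then show "u = r" by simp
qed

lemma dd_edge: "(u,w) \<in> E \<Longrightarrow> dd w \<le> Suc (dd u)"
proof -
  assume e: "(u,w) \<in> E"
  then have "u \<in> V" using edgeV by blast
  then have "(r,u) \<in> E ^^ dd u" by (rule dd_path)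
  then have "(r,w) \<in> E ^^ Suc (dd u)" using e by (rule relpow_Suc_I)
  then show ?thesis unfolding graph_dist_def by (rule Least_le)
qed

lemma dd_edge2: "(u,w) \<in> E \<Longrightarrow> dd u \<le> Suc (dd w)"
  by (rule dd_edge[OF edge_sym])

lemma dd_pred: "u \<in> V \<Longrightarrow> dd u = Suc k \<Longrightarrow> \<exists>w. (w,u) \<in> E \<and> dd w = k"
proof -
  assume u: "u \<in> V" "dd u = Suc k"
  then have "(r,u) \<in> E ^^ Suc k" using dd_path[OF u(1)] by simp
  then obtain w where w: "(r,w) \<in> E ^^ k" "(w,u) \<in> E" by (rule relpow_Suc_E)
  have "dd w \<le> k" using w(1) unfolding graph_dist_def by (rule Least_le)
  moreover have "dd u \<le> Suc (dd w)" using dd_edge[OF w(2)] .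
  ultimately show ?thesis using w u by auto
qed

lemma dd_levels: "x \<in> V \<Longrightarrow> m \<le> dd x \<Longrightarrow> \<exists>w\<in>V. dd w = m"
proof (induction "dd x" arbitrary: x)
  case 0 then show ?case by (metis le_zero_eq)
next
  case (Suc k)
  show ?case
  proof (cases "m = dd x")
    case True then show ?thesis using Suc by auto
  next
    case False
    have "dd x = Suc k" using Suc.hyps(2) by simp
    then obtain w where w: "(w,x) \<in> E" "dd w = k" using dd_pred[OF Suc.prems(1)] by blast
    have "m \<le> dd w" using False Suc.prems(2) w(2) \<open>dd x = Suc k\<close> by simp
    then show ?thesis using Suc.hyps(1)[of w] w edgeV by blast
  qed
qed

lemma dd_less: "u \<in> V \<Longrightarrow> dd u < card V"
proof -
  assume u: "u \<in> V"
  have "{0..dd u} \<subseteq> dd ` V" using dd_levels[OF u] by (auto simp: image_iff) (metis)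
  then have "card {0..dd u} \<le> card (dd ` V)" using finV by (intro card_mono) auto
  also have "\<dots> \<le> card V" using finV by (rule card_image_le)
  finally show ?thesis by simp
qed

end

locale bfs2 = bfs +
  assumes n2: "2 \<le> card V"
begin

abbreviation "n \<equiv> card V"

definition child where "child c u w \<longleftrightarrow> st (loc c w) \<noteq> INIT \<and> par (loc c w) = Some u"
definition fresh where "fresh c u \<longleftrightarrow> st (loc c u) = IDLE \<and> dd u + cnt (loc c u) + 1 = cnt (loc c r)"
definition fin where "fin c u \<longleftrightarrow> st (loc c u) = IDLE \<and> dd u + cnt (loc c u) = cnt (loc c r)"
definition req where "req c a b \<longleftrightarrow> st (loc c a) = EXPLORE \<and> wait (loc c a) = Some b \<and> st (loc c b) \<noteq> EXPLORE
   \<and> (child c a b \<longrightarrow> fresh c b)"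
definition rep where "rep c a b \<longleftrightarrow> st (loc c b) = EXPLORE \<and> wait (loc c b) = Some a \<and> st (loc c a) \<noteq> INIT
   \<and> st (loc c a) \<noteq> EXPLORE \<and> (child c b a \<longrightarrow> fin c a)"

definition NI where "NI c jr \<longleftrightarrow>
  par (loc c r) = None \<and>
  ((st (loc c r) = IDLE \<and> jr = cnt (loc c r) \<and> jr < n - 1 \<and> msgs c = {#} \<and> (\<forall>u. st (loc c u) \<noteq> INIT \<longrightarrow> fin c u)) \<or>
   (st (loc c r) = EXPLORE \<and> Suc jr = cnt (loc c r) \<and> cnt (loc c r) \<le> n - 1)) \<and>
  (\<forall>u. st (loc c u) \<noteq> INIT \<longrightarrow> u \<in> V) \<and>
  (\<forall>u. u \<noteq> r \<longrightarrow> st (loc c u) \<noteq> INIT \<longrightarrow> (\<exists>p. par (loc c u) = Some p \<and> (u,p) \<in> E \<and> Suc (dd p) = dd u)) \<and>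
  (\<forall>u\<in>V. dd u \<le> jr \<longrightarrow> st (loc c u) \<noteq> INIT) \<and>
  (\<forall>u\<in>V. cnt (loc c r) < dd u \<longrightarrow> st (loc c u) = INIT) \<and>
  (\<forall>u. st (loc c u) \<noteq> DONE) \<and>
  (\<forall>u. chl (loc c u) \<subseteq> nbrs E u) \<and>
  (\<forall>u. u \<noteq> r \<longrightarrow> st (loc c u) \<noteq> INIT \<longrightarrow> fresh c u \<or> fin c u \<or> st (loc c u) = EXPLORE) \<and>
  (\<forall>u. st (loc c u) = EXPLORE \<longrightarrow> dd u + cnt (loc c u) = cnt (loc c r) \<and> 1 \<le> cnt (loc c u) \<and> \<not> dummy (loc c u)
      \<and> todo (loc c u) \<subseteq> nbrs E u \<and> (\<forall>p. par (loc c u) = Some p \<longrightarrow> p \<notin> todo (loc c u))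
      \<and> (\<forall>w. wait (loc c u) = Some w \<longrightarrow> (u,w) \<in> E \<and> w \<notin> todo (loc c u))) \<and>
  (\<forall>u w. st (loc c u) = EXPLORE \<longrightarrow> child c u w \<longrightarrow> (w \<in> todo (loc c u) \<longrightarrow> fresh c w)
      \<and> (w \<notin> todo (loc c u) \<longrightarrow> wait (loc c u) \<noteq> Some w \<longrightarrow> fin c w)) \<and>
  (\<forall>u w. st (loc c u) = EXPLORE \<longrightarrow> (u,w) \<in> E \<longrightarrow> w \<notin> todo (loc c u) \<longrightarrow> wait (loc c u) \<noteq> Some w
      \<longrightarrow> dd w = Suc (dd u) \<longrightarrow> st (loc c w) \<noteq> INIT) \<and>
  (\<forall>u w. fresh c u \<longrightarrow> child c u w \<longrightarrow> fresh c w) \<and>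
  (\<forall>u w. fin c u \<longrightarrow> child c u w \<longrightarrow> fin c w) \<and>
  (\<forall>u w. fin c u \<longrightarrow> (u,w) \<in> E \<longrightarrow> dd w = Suc (dd u) \<longrightarrow> dd w \<le> cnt (loc c r) \<longrightarrow> st (loc c w) \<noteq> INIT) \<and>
  (\<forall>u. u \<noteq> r \<longrightarrow> st (loc c u) = EXPLORE \<longrightarrow> (\<exists>p. par (loc c u) = Some p \<and> st (loc c p) = EXPLORE \<and> wait (loc c p) = Some u)) \<and>
  (\<forall>u w. st (loc c u) = EXPLORE \<longrightarrow> st (loc c w) = EXPLORE \<longrightarrow> dd u = dd w \<longrightarrow> u = w) \<and>
  (\<forall>u. st (loc c u) = EXPLORE \<longrightarrow> wait (loc c u) = None \<longrightarrow> msgs c = {#}) \<and>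
  (\<forall>u w. st (loc c u) = EXPLORE \<longrightarrow> wait (loc c u) = None \<longrightarrow> st (loc c w) = EXPLORE \<longrightarrow> wait (loc c w) = None \<longrightarrow> u = w) \<and>
  (msgs c = {#} \<or> (\<exists>a b. msgs c = {#(a,b)#} \<and> (req c a b \<or> rep c a b)))"

definition CI where "CI c jr \<longleftrightarrow>
  par (loc c r) = None \<and> cnt (loc c r) = n - 1 \<and>
  ((st (loc c r) = EXPLORE \<and> Suc jr = n - 1) \<or> (st (loc c r) = DONE \<and> jr = n - 1)) \<and>
  (\<forall>u. st (loc c u) \<noteq> INIT \<longrightarrow> u \<in> V) \<and>
  (\<forall>u\<in>V. st (loc c u) \<noteq> INIT) \<and>
  (\<forall>u. u \<noteq> r \<longrightarrow> st (loc c u) \<noteq> INIT \<longrightarrow> (\<exists>p. par (loc c u) = Some p \<and> (u,p) \<in> E \<and> Suc (dd p) = dd u)) \<and>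
  (\<forall>u. st (loc c u) = EXPLORE \<longrightarrow> todo (loc c u) \<subseteq> nbrs E u) \<and>
  (\<forall>u. chl (loc c u) \<subseteq> nbrs E u) \<and>
  (\<forall>x. x \<in># msgs c \<longrightarrow> x \<in> E)"


lemma NI_facts: assumes "NI c jr" shows
  "par (loc c r) = None"
  "(st (loc c r) = IDLE \<and> jr = cnt (loc c r) \<and> jr < n - 1 \<and> msgs c = {#} \<and> (\<forall>u. st (loc c u) \<noteq> INIT \<longrightarrow> fin c u)) \<or>
   (st (loc c r) = EXPLORE \<and> Suc jr = cnt (loc c r) \<and> cnt (loc c r) \<le> n - 1)"
  "\<And>u. st (loc c u) \<noteq> INIT \<Longrightarrow> u \<in> V"
  "\<And>u. u \<noteq> r \<Longrightarrow> st (loc c u) \<noteq> INIT \<Longrightarrow> (\<exists>p. par (loc c u) = Some p \<and> (u,p) \<in> E \<and> Suc (dd p) = dd u)"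
  "\<And>u. u\<in>V \<Longrightarrow> dd u \<le> jr \<Longrightarrow> st (loc c u) \<noteq> INIT"
  "\<And>u. u\<in>V \<Longrightarrow> cnt (loc c r) < dd u \<Longrightarrow> st (loc c u) = INIT"
  "\<And>u. st (loc c u) \<noteq> DONE"
  "\<And>u. chl (loc c u) \<subseteq> nbrs E u"
  "\<And>u. u \<noteq> r \<Longrightarrow> st (loc c u) \<noteq> INIT \<Longrightarrow> fresh c u \<or> fin c u \<or> st (loc c u) = EXPLORE"
  "\<And>u. st (loc c u) = EXPLORE \<Longrightarrow> dd u + cnt (loc c u) = cnt (loc c r) \<and> 1 \<le> cnt (loc c u) \<and> \<not> dummy (loc c u)
      \<and> todo (loc c u) \<subseteq> nbrs E u \<and> (\<forall>p. par (loc c u) = Some p \<longrightarrow> p \<notin> todo (loc c u))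
      \<and> (\<forall>w. wait (loc c u) = Some w \<longrightarrow> (u,w) \<in> E \<and> w \<notin> todo (loc c u))"
  "\<And>u w. st (loc c u) = EXPLORE \<Longrightarrow> child c u w \<Longrightarrow> (w \<in> todo (loc c u) \<longrightarrow> fresh c w)
      \<and> (w \<notin> todo (loc c u) \<longrightarrow> wait (loc c u) \<noteq> Some w \<longrightarrow> fin c w)"
  "\<And>u w. st (loc c u) = EXPLORE \<Longrightarrow> (u,w) \<in> E \<Longrightarrow> w \<notin> todo (loc c u) \<Longrightarrow> wait (loc c u) \<noteq> Some w
      \<Longrightarrow> dd w = Suc (dd u) \<Longrightarrow> st (loc c w) \<noteq> INIT"
  "\<And>u w. fresh c u \<Longrightarrow> child c u w \<Longrightarrow> fresh c w"
  "\<And>u w. fin c u \<Longrightarrow> child c u w \<Longrightarrow> fin c w"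
  "\<And>u w. fin c u \<Longrightarrow> (u,w) \<in> E \<Longrightarrow> dd w = Suc (dd u) \<Longrightarrow> dd w \<le> cnt (loc c r) \<Longrightarrow> st (loc c w) \<noteq> INIT"
  "\<And>u. u \<noteq> r \<Longrightarrow> st (loc c u) = EXPLORE \<Longrightarrow> (\<exists>p. par (loc c u) = Some p \<and> st (loc c p) = EXPLORE \<and> wait (loc c p) = Some u)"
  "\<And>u w. st (loc c u) = EXPLORE \<Longrightarrow> st (loc c w) = EXPLORE \<Longrightarrow> dd u = dd w \<Longrightarrow> u = w"
  "\<And>u. st (loc c u) = EXPLORE \<Longrightarrow> wait (loc c u) = None \<Longrightarrow> msgs c = {#}"
  "\<And>u w. st (loc c u) = EXPLORE \<Longrightarrow> wait (loc c u) = None \<Longrightarrow> st (loc c w) = EXPLORE \<Longrightarrow> wait (loc c w) = None \<Longrightarrow> u = w"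
  "msgs c = {#} \<or> (\<exists>a b. msgs c = {#(a,b)#} \<and> (req c a b \<or> rep c a b))"
  subgoal using assms[unfolded NI_def, THEN conjunct1] by blast
  subgoal using assms[unfolded NI_def, THEN conjunct2, THEN conjunct1] by blast
  subgoal using assms[unfolded NI_def, THEN conjunct2, THEN conjunct2, THEN conjunct1] by blast
  subgoal using assms[unfolded NI_def, THEN conjunct2, THEN conjunct2, THEN conjunct2, THEN conjunct1] by blast
  subgoal using assms[unfolded NI_def, THEN conjunct2, THEN conjunct2, THEN conjunct2, THEN conjunct2, THEN conjunct1] by blast
  subgoal using assms[unfolded NI_def, THEN conjunct2, THEN conjunct2, THEN conjunct2, THEN conjunct2, THEN conjunct2, THEN conjunct1] by blast
  subgoal using assms[unfolded NI_def, THEN conjunct2, THEN conjunct2, THEN conjunct2, THEN conjunct2, THEN conjunct2, THEN conjunct2, THEN conjunct1] by blast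
  subgoal using assms[unfolded NI_def, THEN conjunct2, THEN conjunct2, THEN conjunct2, THEN conjunct2, THEN conjunct2, THEN conjunct2, THEN conjunct2, THEN conjunct1] by blast
  subgoal using assms[unfolded NI_def, THEN conjunct2, THEN conjunct2, THEN conjunct2, THEN conjunct2, THEN conjunct2, THEN conjunct2, THEN conjunct2, THEN conjunct2, THEN conjunct1] by blast
  subgoal using assms[unfolded NI_def, THEN conjunct2, THEN conjunct2, THEN conjunct2, THEN conjunct2, THEN conjunct2, THEN conjunct2, THEN conjunct2, THEN conjunct2, THEN conjunct2, THEN conjunct1] by blast
  subgoal using assms[unfolded NI_def, THEN conjunct2, THEN conjunct2, THEN conjunct2, THEN conjunct2, THEN conjunct2, THEN conjunct2, THEN conjunct2, THEN conjunct2, THEN conjunct2, THEN conjunct2, THEN conjunct1] by blast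
  subgoal using assms[unfolded NI_def, THEN conjunct2, THEN conjunct2, THEN conjunct2, THEN conjunct2, THEN conjunct2, THEN conjunct2, THEN conjunct2, THEN conjunct2, THEN conjunct2, THEN conjunct2, THEN conjunct2, THEN conjunct1] by blast
  subgoal using assms[unfolded NI_def, THEN conjunct2, THEN conjunct2, THEN conjunct2, THEN conjunct2, THEN conjunct2, THEN conjunct2, THEN conjunct2, THEN conjunct2, THEN conjunct2, THEN conjunct2, THEN conjunct2, THEN conjunct2, THEN conjunct1] by blast
  subgoal using assms[unfolded NI_def, THEN conjunct2, THEN conjunct2, THEN conjunct2, THEN conjunct2, THEN conjunct2, THEN conjunct2, THEN conjunct2, THEN conjunct2, THEN conjunct2, THEN conjunct2, THEN conjunct2, THEN conjunct2, THEN conjunct2, THEN conjunct1] by blast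
  subgoal using assms[unfolded NI_def, THEN conjunct2, THEN conjunct2, THEN conjunct2, THEN conjunct2, THEN conjunct2, THEN conjunct2, THEN conjunct2, THEN conjunct2, THEN conjunct2, THEN conjunct2, THEN conjunct2, THEN conjunct2, THEN conjunct2, THEN conjunct2, THEN conjunct1] by blast
  subgoal using assms[unfolded NI_def, THEN conjunct2, THEN conjunct2, THEN conjunct2, THEN conjunct2, THEN conjunct2, THEN conjunct2, THEN conjunct2, THEN conjunct2, THEN conjunct2, THEN conjunct2, THEN conjunct2, THEN conjunct2, THEN conjunct2, THEN conjunct2, THEN conjunct2, THEN conjunct1] by blast
  subgoal using assms[unfolded NI_def, THEN conjunct2, THEN conjunct2, THEN conjunct2, THEN conjunct2, THEN conjunct2, THEN conjunct2, THEN conjunct2, THEN conjunct2, THEN conjunct2, THEN conjunct2, THEN conjunct2, THEN conjunct2, THEN conjunct2, THEN conjunct2, THEN conjunct2, THEN conjunct2, THEN conjunct1] by blast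
  subgoal using assms[unfolded NI_def, THEN conjunct2, THEN conjunct2, THEN conjunct2, THEN conjunct2, THEN conjunct2, THEN conjunct2, THEN conjunct2, THEN conjunct2, THEN conjunct2, THEN conjunct2, THEN conjunct2, THEN conjunct2, THEN conjunct2, THEN conjunct2, THEN conjunct2, THEN conjunct2, THEN conjunct2, THEN conjunct1] by blast
  subgoal using assms[unfolded NI_def, THEN conjunct2, THEN conjunct2, THEN conjunct2, THEN conjunct2, THEN conjunct2, THEN conjunct2, THEN conjunct2, THEN conjunct2, THEN conjunct2, THEN conjunct2, THEN conjunct2, THEN conjunct2, THEN conjunct2, THEN conjunct2, THEN conjunct2, THEN conjunct2, THEN conjunct2, THEN conjunct2, THEN conjunct1] by blast
  subgoal using assms[unfolded NI_def, THEN conjunct2, THEN conjunct2, THEN conjunct2, THEN conjunct2, THEN conjunct2, THEN conjunct2, THEN conjunct2, THEN conjunct2, THEN conjunct2, THEN conjunct2, THEN conjunct2, THEN conjunct2, THEN conjunct2, THEN conjunct2, THEN conjunct2, THEN conjunct2, THEN conjunct2, THEN conjunct2, THEN conjunct2] by blast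
  done

lemma ni_sp:
  assumes I: "NI c jr" and s: "step n E r c (SetParent v u) c'"
  shows "NI c' jr"
proof -
  note F = NI_facts[OF I]
  from s have m: "(v,u) \<in># msgs c" and iu: "st (loc c u) = INIT"
    and c': "c' = \<lparr> loc = (loc c)(u := \<lparr>st = IDLE, par = Some v, chl = nbrs E u - {v}, cnt = 0,
                              todo = {}, wait = None, dummy = False\<rparr>),
         msgs = msgs c - {#(v, u)#} + {#(u, v)#} \<rparr>"
    by (cases rule: step.cases; simp)+
  have ms: "msgs c = {#(v,u)#}" using F(20) m by auto
  have rq: "req c v u" using F(20) ms iu unfolding rep_def by auto
  then have ev: "st (loc c v) = EXPLORE" and wv: "wait (loc c v) = Some u" unfolding req_def by auto
  have evu: "(v,u) \<in> E" using F(10)[OF ev] wv by auto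
  have ur: "u \<noteq> r" using F(2) iu by auto
  have rE: "st (loc c r) = EXPLORE \<and> Suc jr = cnt (loc c r) \<and> cnt (loc c r) \<le> n - 1"
  proof -
    have "st (loc c r) \<noteq> IDLE"
    proof
      assume "st (loc c r) = IDLE"
      then have "\<forall>u. st (loc c u) \<noteq> INIT \<longrightarrow> fin c u" using F(2) by auto
      then have "fin c v" using ev by simp
      then show False using ev unfolding fin_def by simp
    qed
    then show ?thesis using F(2) by auto
  qed
  have uV: "u \<in> V" "v \<in> V" using edgeV evu by auto
  have "dd v + cnt (loc c v) = cnt (loc c r)" "1 \<le> cnt (loc c v)" using F(10)[OF ev] by auto
  moreover have "dd u \<le> Suc (dd v)" using dd_edge evu .
  moreover have "\<not> dd u \<le> jr" using F(5) uV iu by auto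
  ultimately have du: "dd u = Suc (dd v)" "dd u = cnt (loc c r)" using rE by auto
  have noch: "\<And>w. st (loc c w) \<noteq> INIT \<Longrightarrow> par (loc c w) \<noteq> Some u"
  proof
    fix w assume w: "st (loc c w) \<noteq> INIT" "par (loc c w) = Some u"
    have "w \<noteq> r" using F(1) w by auto
    then obtain p where "par (loc c w) = Some p" "Suc (dd p) = dd w" using F(4) w(1) by blast
    then have "Suc (dd u) = dd w" using w(2) by simp
    moreover have "w \<in> V" using F(3) w(1) by blast
    ultimately show False using F(6)[of w] du w(1) by simp
  qed
  have L: "loc c' = (loc c)(u := \<lparr>st = IDLE, par = Some v, chl = nbrs E u - {v}, cnt = 0,
                              todo = {}, wait = None, dummy = False\<rparr>)" using c' by simp
  have M: "msgs c' = {#(u,v)#}" using c' ms by simp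
  have rr: "loc c' r = loc c r" using L ur by simp
  have X: "\<And>x. x \<noteq> u \<Longrightarrow> loc c' x = loc c x" using L by simp
  have Xu: "loc c' u = \<lparr>st = IDLE, par = Some v, chl = nbrs E u - {v}, cnt = 0,
                              todo = {}, wait = None, dummy = False\<rparr>" using L by simp
  have vu: "v \<noteq> u" using edge_neq evu .
  have fr: "\<And>x. fresh c' x \<longleftrightarrow> fresh c x \<and> x \<noteq> u"
  proof -
    fix x show "fresh c' x \<longleftrightarrow> fresh c x \<and> x \<noteq> u"
      by (cases "x = u") (use Xu rr du iu X in \<open>simp_all add: fresh_def\<close>)
  qed
  have fn: "\<And>x. fin c' x \<longleftrightarrow> (fin c x \<or> x = u)"
  proof -
    fix x show "fin c' x \<longleftrightarrow> (fin c x \<or> x = u)"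
      by (cases "x = u") (use Xu rr du iu X in \<open>simp_all add: fin_def\<close>)
  qed
  have ch: "\<And>x w. child c' x w \<longleftrightarrow> (child c x w \<or> (w = u \<and> x = v))"
  proof -
    fix x w show "child c' x w \<longleftrightarrow> (child c x w \<or> (w = u \<and> x = v))"
      by (cases "w = u") (use Xu iu X in \<open>auto simp add: child_def\<close>)
  qed
  have nb: "\<And>x. st (loc c x) = EXPLORE \<Longrightarrow> wait (loc c x) = None \<Longrightarrow> False"
    using F(18) ms by auto
  have stX: "\<And>x. st (loc c' x) = (if x = u then IDLE else st (loc c x))" using X Xu by simp
  show ?thesis
    unfolding NI_def
    apply (intro conjI)
    subgoal using rr F(1) by simp
    subgoal using rr rE by simp
    subgoal using F(3) uV stX by (metis)
    subgoal apply (intro allI impI) subgoal for x by (cases "x = u") (use F(4) edge_sym[OF evu] du X Xu in auto) done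
    subgoal using F(5) stX by (metis nstate.distinct(1))
    subgoal using F(6) du rr stX by (metis less_irrefl)
    subgoal using F(7) stX by (metis nstate.distinct)
    subgoal apply (intro allI) subgoal for x by (cases "x = u") (use F(8) X Xu in auto) done
    subgoal apply (intro allI) subgoal for x by (cases "x = u") (use F(9)[of x] fr[of x] fn[of x] X[of x] in auto) done
    subgoal apply (intro allI) subgoal for x using F(10)[of x] X[of x] Xu rr by (cases "x = u") auto done
    subgoal apply (intro allI impI) subgoal for x w using F(11)[of x w] F(10)[OF ev] ch[of x w] fr[of w] fn[of w] X[of x] Xu iu wv by (cases "x = u") (auto simp: child_def) done
    subgoal apply (intro allI impI) subgoal for x w using F(12)[of x w] X[of x] X[of w] Xu by (cases "x = u"; cases "w = u") auto done
    subgoal apply (intro allI impI) subgoal for x w using F(13)[of x w] fr[of x] fr[of w] ch[of x w] ev iu by (auto simp: child_def fresh_def) done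
    subgoal apply (intro allI impI) subgoal for x w using F(14)[of x w] fn[of x] fn[of w] ch[of x w] noch[of w] vu ev by (auto simp: child_def fin_def) done
    subgoal apply (intro allI impI) subgoal for x w using F(15)[of x w] fn[of x] stX[of w] du rr by auto done
    subgoal apply (intro allI impI) subgoal premises P for x
    proof -
      have xu: "x \<noteq> u" using P(2) Xu by auto
      obtain p where p: "par (loc c x) = Some p \<and> st (loc c p) = EXPLORE \<and> wait (loc c p) = Some x"
        using F(16)[of x] P X[OF xu] by auto
      moreover have "p \<noteq> u" using p iu by auto
      ultimately show ?thesis using X xu by auto
    qed done
    subgoal apply (intro allI impI) subgoal for x w using F(17)[of x w] stX[of x] stX[of w] by (auto split: if_splits) done
    subgoal apply (intro allI impI) subgoal for x using nb[of x] X[of x] Xu by (cases "x = u") auto done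
    subgoal apply (intro allI impI) subgoal for x w using nb[of x] X[of x] Xu by (cases "x = u") auto done
    subgoal
    proof -
      have "rep c' u v" using X[OF vu] Xu ev wv fn[of u] by (auto simp: rep_def)
      then show ?thesis using M by blast
    qed
    done
qed


lemma rootE:
  assumes I: "NI c jr" and ex: "st (loc c x) = EXPLORE"
  shows "st (loc c r) = EXPLORE \<and> Suc jr = cnt (loc c r) \<and> cnt (loc c r) \<le> n - 1"
proof -
  note F = NI_facts[OF I]
  have "st (loc c r) \<noteq> IDLE"
  proof
    assume "st (loc c r) = IDLE"
    then have "\<forall>u. st (loc c u) \<noteq> INIT \<longrightarrow> fin c u" using F(2) by auto
    then have "fin c x" using ex by simp
    then show False using ex unfolding fin_def by simp
  qed
  then show ?thesis using F(2) by auto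
qed

lemma complete:
  assumes I: "NI c jr" and er: "st (loc c r) = EXPLORE" and wr: "wait (loc c r) = None"
    and tr: "todo (loc c r) = {}"
  shows "\<And>x. x \<noteq> r \<Longrightarrow> st (loc c x) \<noteq> INIT \<Longrightarrow> fin c x"
    and "\<And>x. x \<in> V \<Longrightarrow> dd x \<le> cnt (loc c r) \<Longrightarrow> st (loc c x) \<noteq> INIT"
proof -
  note F = NI_facts[OF I]
  have rE: "Suc jr = cnt (loc c r)" using F(2) er by auto
  show A: "\<And>x. x \<noteq> r \<Longrightarrow> st (loc c x) \<noteq> INIT \<Longrightarrow> fin c x"
  proof -
    fix x show "x \<noteq> r \<Longrightarrow> st (loc c x) \<noteq> INIT \<Longrightarrow> fin c x"
    proof (induct "dd x" arbitrary: x rule: less_induct)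
      case (less x)
      obtain p where p: "par (loc c x) = Some p" "(x,p) \<in> E" "Suc (dd p) = dd x"
        using F(4) less.prems by blast
      have chx: "child c p x" using p less.prems unfolding child_def by simp
      show ?case
      proof (cases "p = r")
        case True
        then show ?thesis using F(11)[OF er, of x] chx tr wr by simp
      next
        case False
        have xV: "x \<in> V" using F(3) less.prems by blast
        have pV: "p \<in> V" using edgeV p(2) by blast
        have "\<not> cnt (loc c r) < dd x" using F(6)[OF xV] less.prems by blast
        then have "dd p \<le> jr" using p(3) rE by simp
        then have "st (loc c p) \<noteq> INIT" using F(5)[OF pV] by blast
        then have "fin c p" using less.hyps[of p] p(3) False by simp
        then show ?thesis using F(14) chx by blast
      qed
    qed
  qed
  show "\<And>x. x \<in> V \<Longrightarrow> dd x \<le> cnt (loc c r) \<Longrightarrow> st (loc c x) \<noteq> INIT"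
  proof -
    fix x assume xV: "x \<in> V" and dx: "dd x \<le> cnt (loc c r)"
    show "st (loc c x) \<noteq> INIT"
    proof (cases "dd x \<le> jr")
      case True then show ?thesis using F(5) xV by blast
    next
      case False
      then have dx1: "dd x = Suc jr" using dx rE by simp
      then obtain w where w: "(w,x) \<in> E" "dd w = jr" using dd_pred[OF xV] by blast
      have wV: "w \<in> V" using edgeV w(1) by blast
      show ?thesis
      proof (cases "w = r")
        case True
        then show ?thesis using F(12)[OF er, of x] w dx1 tr wr by simp
      next
        case False
        have "st (loc c w) \<noteq> INIT" using F(5)[OF wV] w(2) by simp
        then have "fin c w" using A False by blast
        then show ?thesis using F(15)[of w x] w dx1 dx by simp
      qed
    qed
  qed
qed

lemma ni_ms:
  assumes I: "NI c jr" and s: "step n E r c (MarkSibling v u) c'"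
  shows "NI c' jr"
proof -
  note F = NI_facts[OF I]
  from s have m: "(v,u) \<in># msgs c" and stu: "st (loc c u) = IDLE \<or> st (loc c u) = DONE"
    and pu: "par (loc c u) \<noteq> Some v"
    and c': "c' = \<lparr> loc = (loc c)(u := (loc c u)\<lparr>chl := chl (loc c u) - {v}\<rparr>),
         msgs = msgs c - {#(v, u)#} + {#(u, v)#} \<rparr>"
    by (cases rule: step.cases; simp)+
  have iu: "st (loc c u) = IDLE" using stu F(7) by auto
  have ms: "msgs c = {#(v,u)#}" using F(20) m by auto
  have rq: "req c v u" using F(20) ms iu unfolding rep_def by auto
  then have ev: "st (loc c v) = EXPLORE" and wv: "wait (loc c v) = Some u" unfolding req_def by auto
  have evu: "(v,u) \<in> E" using F(10)[OF ev] wv by auto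
  have vu: "v \<noteq> u" using edge_neq evu .
  have M: "msgs c' = {#(u,v)#}" using c' ms by simp
  have X: "\<And>x. x \<noteq> u \<Longrightarrow> loc c' x = loc c x" using c' by simp
  have Xu: "loc c' u = (loc c u)\<lparr>chl := chl (loc c u) - {v}\<rparr>" using c' by simp
  have S: "\<And>x. st (loc c' x) = st (loc c x)" "\<And>x. par (loc c' x) = par (loc c x)"
    "\<And>x. cnt (loc c' x) = cnt (loc c x)" "\<And>x. todo (loc c' x) = todo (loc c x)"
    "\<And>x. wait (loc c' x) = wait (loc c x)" "\<And>x. dummy (loc c' x) = dummy (loc c x)"
    using X Xu by (metis lstate.select_convs lstate.surjective lstate.update_convs)+
  have fr: "fresh c' = fresh c" by (rule ext) (simp add: fresh_def S)
  have fn: "fin c' = fin c" by (rule ext) (simp add: fin_def S)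
  have ch: "child c' = child c" by (rule ext)+ (simp add: child_def S)
  have nb: "\<And>x. st (loc c x) = EXPLORE \<Longrightarrow> wait (loc c x) = None \<Longrightarrow> False"
    using F(18) ms by auto
  show ?thesis
    unfolding NI_def fr fn ch S
    apply (intro conjI)
    subgoal using F(1) .
    subgoal using F(2) ms by simp
    subgoal using F(3) by blast
    subgoal using F(4) by blast
    subgoal using F(5) by blast
    subgoal using F(6) by blast
    subgoal using F(7) by blast
    subgoal apply (intro allI) subgoal for x by (cases "x = u") (use F(8) X Xu in auto) done
    subgoal using F(9) by blast
    subgoal using F(10) by blast
    subgoal using F(11) by blast
    subgoal using F(12) by blast
    subgoal using F(13) by blast
    subgoal using F(14) by blast
    subgoal using F(15) by blast
    subgoal using F(16) by blast
    subgoal using F(17) by blast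
    subgoal using nb by blast
    subgoal using nb by blast
    subgoal
    proof -
      have "rep c' u v" using ev wv iu pu by (auto simp: rep_def S child_def)
      then show ?thesis using M by blast
    qed
    done
qed

lemma ni_rr:
  assumes I: "NI c jr" and s: "step n E r c (RecvReply v u) c'"
  shows "NI c' jr"
proof -
  note F = NI_facts[OF I]
  from s have eu: "st (loc c u) = EXPLORE" and wu: "wait (loc c u) = Some v" and m: "(v,u) \<in># msgs c"
    and c': "c' = \<lparr> loc = (loc c)(u := (loc c u)\<lparr>wait := None\<rparr>), msgs = msgs c - {#(v, u)#} \<rparr>"
    by (cases rule: step.cases; simp)+
  have ms: "msgs c = {#(v,u)#}" using F(20) m by auto
  have rp: "rep c v u" using F(20) ms eu unfolding req_def by auto
  then have sv: "st (loc c v) \<noteq> INIT" "st (loc c v) \<noteq> EXPLORE" and fv: "child c u v \<Longrightarrow> fin c v"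
    unfolding rep_def by auto
  have M: "msgs c' = {#}" using c' ms by simp
  have X: "\<And>x. x \<noteq> u \<Longrightarrow> loc c' x = loc c x" using c' by simp
  have Xu: "loc c' u = (loc c u)\<lparr>wait := None\<rparr>" using c' by simp
  have S: "\<And>x. st (loc c' x) = st (loc c x)" "\<And>x. par (loc c' x) = par (loc c x)"
    "\<And>x. cnt (loc c' x) = cnt (loc c x)" "\<And>x. todo (loc c' x) = todo (loc c x)"
    "\<And>x. chl (loc c' x) = chl (loc c x)" "\<And>x. dummy (loc c' x) = dummy (loc c x)"
    using X Xu by (metis lstate.select_convs lstate.surjective lstate.update_convs)+
  have W: "\<And>x. wait (loc c' x) = (if x = u then None else wait (loc c x))" using X Xu by simp
  have fr: "fresh c' = fresh c" by (rule ext) (simp add: fresh_def S)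
  have fn: "fin c' = fin c" by (rule ext) (simp add: fin_def S)
  have ch: "child c' = child c" by (rule ext)+ (simp add: child_def S)
  have nb: "\<And>x. st (loc c x) = EXPLORE \<Longrightarrow> wait (loc c x) = None \<Longrightarrow> False"
    using F(18) ms by auto
  show ?thesis
    unfolding NI_def fr fn ch S
    apply (intro conjI)
    subgoal using F(1) .
    subgoal using F(2) ms by simp
    subgoal using F(3) by blast
    subgoal using F(4) by blast
    subgoal using F(5) by blast
    subgoal using F(6) by blast
    subgoal using F(7) by blast
    subgoal using F(8) by blast
    subgoal using F(9) by blast
    subgoal apply (intro allI impI) subgoal for x using F(10)[of x] W[of x] by auto done
    subgoal apply (intro allI impI) subgoal for x w using F(11)[of x w] W[of x] fv wu by (cases "x = u") auto done
    subgoal apply (intro allI impI) subgoal for x w using F(12)[of x w] W[of x] sv wu by (cases "x = u") auto done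
    subgoal using F(13) by blast
    subgoal using F(14) by blast
    subgoal using F(15) by blast
    subgoal apply (intro allI impI) subgoal premises P for x
    proof -
      obtain p where p: "par (loc c x) = Some p" "st (loc c p) = EXPLORE" "wait (loc c p) = Some x"
        using F(16)[of x] P by auto
      have "p \<noteq> u" using p sv wu P by auto
      then show ?thesis using p W[of p] by auto
    qed done
    subgoal using F(17) by blast
    subgoal using M by blast
    subgoal apply (intro allI impI) subgoal for x w using nb[of x] nb[of w] W[of x] W[of w] by (auto split: if_splits) done
    subgoal using M by blast
    done
qed

lemma ni_sn:
  assumes I: "NI c jr" and s: "step n E r c (SendNext u v) c'"
  shows "NI c' jr"
proof -
  note F = NI_facts[OF I]
  from s have eu: "st (loc c u) = EXPLORE" and wu: "wait (loc c u) = None" and vt: "v \<in> todo (loc c u)"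
    and c': "c' = \<lparr> loc = (loc c)(u := (loc c u)\<lparr>todo := todo (loc c u) - {v}, wait := Some v\<rparr>),
         msgs = msgs c + {#(u, v)#} \<rparr>"
    by (cases rule: step.cases; simp)+
  have ms: "msgs c = {#}" using F(18) eu wu by blast
  have M: "msgs c' = {#(u,v)#}" using c' ms by simp
  have uv: "(u,v) \<in> E" using F(10)[OF eu] vt by (auto simp: nbrs_def)
  have vu: "u \<noteq> v" using edge_neq uv .
  have X: "\<And>x. x \<noteq> u \<Longrightarrow> loc c' x = loc c x" using c' by simp
  have Xu: "loc c' u = (loc c u)\<lparr>todo := todo (loc c u) - {v}, wait := Some v\<rparr>" using c' by simp
  have S: "\<And>x. st (loc c' x) = st (loc c x)" "\<And>x. par (loc c' x) = par (loc c x)"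
    "\<And>x. cnt (loc c' x) = cnt (loc c x)"
    "\<And>x. chl (loc c' x) = chl (loc c x)" "\<And>x. dummy (loc c' x) = dummy (loc c x)"
    using X Xu by (metis lstate.select_convs lstate.surjective lstate.update_convs)+
  have W: "\<And>x. wait (loc c' x) = (if x = u then Some v else wait (loc c x))" using X Xu by simp
  have T: "\<And>x. todo (loc c' x) = (if x = u then todo (loc c u) - {v} else todo (loc c x))" using X Xu by simp
  have fr: "fresh c' = fresh c" by (rule ext) (simp add: fresh_def S)
  have fn: "fin c' = fin c" by (rule ext) (simp add: fin_def S)
  have ch: "child c' = child c" by (rule ext)+ (simp add: child_def S)
  have nb: "\<And>x. st (loc c x) = EXPLORE \<Longrightarrow> wait (loc c x) = None \<Longrightarrow> x = u"
    using F(19) eu wu by blast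
  have vne: "st (loc c v) \<noteq> EXPLORE"
  proof
    assume ev: "st (loc c v) = EXPLORE"
    have d1: "dd v \<le> Suc (dd u)" "dd u \<le> Suc (dd v)" using dd_edge[OF uv] dd_edge2[OF uv] by auto
    consider "dd v = dd u" | "dd v = Suc (dd u)" | "dd u = Suc (dd v)" using d1 by linarith
    then show False
    proof cases
      case 1 then show False using F(17)[OF eu ev] vu by simp
    next
      case 2
      have "v \<noteq> r" using 2 by auto
      then obtain q where q: "par (loc c v) = Some q" "st (loc c q) = EXPLORE" "wait (loc c q) = Some v"
        using F(16) ev by blast
      obtain q' where "par (loc c v) = Some q'" "Suc (dd q') = dd v" using F(4) \<open>v \<noteq> r\<close> ev by fastforce
      then have "dd q = dd u" using q 2 by simp
      then have "q = u" using F(17)[OF q(2) eu] by simp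
      then show False using q wu by simp
    next
      case 3
      have "u \<noteq> r" using 3 by auto
      then obtain p where p: "par (loc c u) = Some p" "st (loc c p) = EXPLORE"
        using F(16) eu by blast
      obtain p' where "par (loc c u) = Some p'" "Suc (dd p') = dd u" using F(4) \<open>u \<noteq> r\<close> eu by fastforce
      then have "dd p = dd v" using p 3 by simp
      then have "p = v" using F(17)[OF p(2) ev] by simp
      then show False using p F(10)[OF eu] vt by auto
    qed
  qed
  show ?thesis
    unfolding NI_def fr fn ch S
    apply (intro conjI)
    subgoal using F(1) .
    subgoal using rootE[OF I eu] by simp
    subgoal using F(3) by blast
    subgoal using F(4) by blast
    subgoal using F(5) by blast
    subgoal using F(6) by blast
    subgoal using F(7) by blast
    subgoal using F(8) by blast
    subgoal using F(9) by blast
    subgoal apply (intro allI impI) subgoal for x using F(10)[of x] W[of x] T[of x] uv by auto done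
    subgoal apply (intro allI impI) subgoal for x w using F(11)[of x w] W[of x] T[of x] wu by (cases "x = u") auto done
    subgoal apply (intro allI impI) subgoal for x w using F(12)[of x w] W[of x] T[of x] wu by (cases "x = u") auto done
    subgoal using F(13) by blast
    subgoal using F(14) by blast
    subgoal using F(15) by blast
    subgoal apply (intro allI impI) subgoal premises P for x
    proof -
      obtain p where p: "par (loc c x) = Some p" "st (loc c p) = EXPLORE" "wait (loc c p) = Some x"
        using F(16)[of x] P by auto
      have "p \<noteq> u" using p wu by auto
      then show ?thesis using p W[of p] by auto
    qed done
    subgoal using F(17) by blast
    subgoal apply (intro allI impI) subgoal for x using nb[of x] W[of x] by (auto split: if_splits) done
    subgoal apply (intro allI impI) subgoal for x w using nb[of x] nb[of w] W[of x] W[of w] by (auto split: if_splits) done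
    subgoal
    proof -
      have "child c u v \<Longrightarrow> fresh c v" using F(11)[OF eu, of v] vt by blast
      then have "req c' u v" using eu vne W[of u] by (auto simp: req_def S fr ch)
      then show ?thesis using M by blast
    qed
    done
qed


lemma ni_es:
  assumes I: "NI c jr" and s: "step n E r c (ExploreStart v u) c'"
  shows "NI c' jr"
proof -
  note F = NI_facts[OF I]
  from s have m: "(v,u) \<in># msgs c" and iu: "st (loc c u) = IDLE" and pu: "par (loc c u) = Some v"
    and c': "c' = \<lparr> loc = (loc c)(u := (loc c u)\<lparr>st := EXPLORE, cnt := Suc (cnt (loc c u)),
                                      todo := nbrs E u - {v}, wait := None, dummy := False\<rparr>),
         msgs = msgs c - {#(v, u)#} \<rparr>"
    by (cases rule: step.cases; simp)+
  have ms: "msgs c = {#(v,u)#}" using F(20) m by auto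
  have rq: "req c v u" using F(20) ms iu unfolding rep_def by auto
  then have ev: "st (loc c v) = EXPLORE" and wv: "wait (loc c v) = Some u" unfolding req_def by auto
  have chvu: "child c v u" using iu pu by (simp add: child_def)
  then have fu: "fresh c u" using rq unfolding req_def by blast
  have evu: "(v,u) \<in> E" using F(10)[OF ev] wv by auto
  have vu: "v \<noteq> u" using edge_neq evu .
  have ur: "u \<noteq> r" using F(1) pu by auto
  have rE: "st (loc c r) = EXPLORE \<and> Suc jr = cnt (loc c r) \<and> cnt (loc c r) \<le> n - 1"
    using rootE[OF I ev] .
  have du: "dd u = Suc (dd v)" using F(4)[OF ur] iu pu by auto
  have M: "msgs c' = {#}" using c' ms by simp
  have X: "\<And>x. x \<noteq> u \<Longrightarrow> loc c' x = loc c x" using c' by simp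
  have Xu: "loc c' u = (loc c u)\<lparr>st := EXPLORE, cnt := Suc (cnt (loc c u)),
                                      todo := nbrs E u - {v}, wait := None, dummy := False\<rparr>" using c' by simp
  have rr: "loc c' r = loc c r" using X ur by simp
  have P: "\<And>x. par (loc c' x) = par (loc c x)" "\<And>x. chl (loc c' x) = chl (loc c x)"
    by (case_tac "x = u", simp_all add: X Xu)+
  have stX: "\<And>x. st (loc c' x) = (if x = u then EXPLORE else st (loc c x))" using X Xu by simp
  have fr: "\<And>x. fresh c' x \<longleftrightarrow> fresh c x \<and> x \<noteq> u"
  proof -
    fix x show "fresh c' x \<longleftrightarrow> fresh c x \<and> x \<noteq> u"
      by (cases "x = u") (use Xu rr X in \<open>simp_all add: fresh_def\<close>)
  qed
  have fn: "\<And>x. fin c' x \<longleftrightarrow> fin c x"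
  proof -
    fix x show "fin c' x \<longleftrightarrow> fin c x"
      by (cases "x = u") (use Xu rr X iu fu in \<open>simp_all add: fin_def fresh_def\<close>)
  qed
  have ch: "\<And>x w. child c' x w \<longleftrightarrow> child c x w"
    unfolding child_def using P stX iu by auto
  have nb: "\<And>x. st (loc c x) = EXPLORE \<Longrightarrow> wait (loc c x) = None \<Longrightarrow> False"
    using F(18) ms by auto
  have chu: "\<And>w. child c u w \<Longrightarrow> w \<in> nbrs E u - {v}"
  proof -
    fix w assume cw: "child c u w"
    have "w \<noteq> r" using cw F(1) by (auto simp: child_def)
    then have "(w,u) \<in> E" "dd w = Suc (dd u)" using F(4)[of w] cw by (auto simp: child_def)
    then show "w \<in> nbrs E u - {v}" using du edge_sym by (auto simp: nbrs_def)
  qed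
  show ?thesis
    unfolding NI_def P
    apply (intro conjI)
    subgoal using F(1) .
    subgoal using rE rr by simp
    subgoal using F(3) stX edgeV evu by auto
    subgoal apply (intro allI impI) subgoal for x using F(4)[of x] stX[of x] iu by (cases "x = u") auto done
    subgoal apply (intro ballI impI) subgoal for x using F(5)[of x] stX[of x] by auto done
    subgoal apply (intro ballI impI) subgoal for x using F(6)[of x] stX[of x] rr iu by auto done
    subgoal apply (intro allI) subgoal for x using F(7)[of x] stX[of x] by auto done
    subgoal using F(8) by blast
    subgoal apply (intro allI impI) subgoal for x using F(9)[of x] stX[of x] fr[of x] fn[of x] by (cases "x = u") auto done
    subgoal apply (intro allI impI) subgoal for x using F(10)[of x] stX[of x] X[of x] Xu rr fu pu
        by (cases "x = u") (auto simp: fresh_def nbrs_def) done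
    subgoal apply (intro allI impI) subgoal for x w
      proof (cases "x = u")
        case True
        assume a: "st (loc c' x) = EXPLORE" "child c' x w"
        then have cw: "child c u w" using ch True by simp
        then have wu: "w \<noteq> u" using pu vu by (auto simp: child_def)
        have "fresh c w" using F(13) fu cw by blast
        then show ?thesis using True chu[OF cw] Xu fr wu by auto
      next
        case False
        assume a: "st (loc c' x) = EXPLORE" "child c' x w"
        then have ex: "st (loc c x) = EXPLORE" "child c x w" using stX ch False by auto
        show ?thesis
        proof (cases "w = u")
          case True
          then have "x = v" using ex(2) pu by (simp add: child_def)
          then show ?thesis using True X[OF False] wv F(10)[OF ev] by auto
        next
          case False
          then show ?thesis using F(11)[OF ex] X[OF \<open>x \<noteq> u\<close>] fr fn by simp
        qed
      qed done
    subgoal apply (intro allI impI) subgoal for x w using F(12)[of x w] stX[of x] stX[of w] X[of x] Xu du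
        by (cases "x = u") (auto simp: nbrs_def) done
    subgoal apply (intro allI impI) subgoal for x w using F(13)[of x w] fr[of x] fr[of w] ch[of x w] ev pu
        by (auto simp: child_def fresh_def) done
    subgoal using F(14) fn ch by blast
    subgoal apply (intro allI impI) subgoal for x w using F(15)[of x w] fn[of x] stX[of w] rr by auto done
    subgoal apply (intro allI impI) subgoal premises Q for x
      proof (cases "x = u")
        case True
        then show ?thesis using pu stX X[OF vu] ev wv by auto
      next
        case False
        obtain p where p: "par (loc c x) = Some p" "st (loc c p) = EXPLORE" "wait (loc c p) = Some x"
          using F(16)[of x] Q stX False by auto
        have "p \<noteq> u" using p iu by auto
        then show ?thesis using p X stX by auto
      qed done
    subgoal apply (intro allI impI) subgoal premises Q for x w
      proof -
        have key: "\<And>y. y \<noteq> u \<Longrightarrow> st (loc c y) = EXPLORE \<Longrightarrow> dd y \<noteq> dd u"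
        proof
          fix y assume y: "y \<noteq> u" "st (loc c y) = EXPLORE" "dd y = dd u"
          have yr: "y \<noteq> r" using y du by auto
          obtain q where q: "par (loc c y) = Some q" "st (loc c q) = EXPLORE" "wait (loc c q) = Some y"
            using F(16)[OF yr y(2)] by auto
          have "Suc (dd q) = dd y" using F(4)[OF yr] y(2) q(1) by fastforce
          then have "q = v" using F(17)[OF q(2) ev] y(3) du by simp
          then show False using q wv y by simp
        qed
        show ?thesis using Q key[of x] key[of w] F(17)[of x w] stX[of x] stX[of w] by (auto split: if_splits)
      qed done
    subgoal apply (intro allI impI) subgoal for x using nb[of x] stX[of x] X[of x] M by (cases "x = u") auto done
    subgoal apply (intro allI impI) subgoal for x w using nb[of x] nb[of w] stX[of x] stX[of w] X[of x] X[of w]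
        by (auto split: if_splits) done
    subgoal using M by blast
    done
qed


lemma fin_facts:
  assumes I: "NI c jr" and s: "step n E r c (Finish u) c'"
  shows "st (loc c u) = EXPLORE" "wait (loc c u) = None" "todo (loc c u) = {}"
    "msgs c = {#}" "cnt (loc c u) \<noteq> n - 1"
    "c' = \<lparr> loc = (loc c)(u := (loc c u)\<lparr>st := IDLE\<rparr>),
         msgs = msgs c + (case par (loc c u) of None \<Rightarrow> {#} | Some p \<Rightarrow> {#(u, p)#}) \<rparr>"
proof -
  note F = NI_facts[OF I]
  from s have eu: "st (loc c u) = EXPLORE" and wu: "wait (loc c u) = None" and tu: "todo (loc c u) = {}"
    and dn: "dummy (loc c u) \<or> cnt (loc c u) \<noteq> n - 1"
    and c': "c' = \<lparr> loc = (loc c)(u := (loc c u)\<lparr>st := (if cnt (loc c u) = n - 1 then DONE else IDLE)\<rparr>),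
         msgs = msgs c + (case par (loc c u) of None \<Rightarrow> {#} | Some p \<Rightarrow> {#(u, p)#}) \<rparr>"
    by (cases rule: step.cases; simp)+
  have cn: "cnt (loc c u) \<noteq> n - 1" using dn F(10)[OF eu] by auto
  show "st (loc c u) = EXPLORE" "wait (loc c u) = None" "todo (loc c u) = {}" "cnt (loc c u) \<noteq> n - 1"
    using eu wu tu cn by auto
  show "msgs c = {#}" using F(18) eu wu by blast
  show "c' = \<lparr> loc = (loc c)(u := (loc c u)\<lparr>st := IDLE\<rparr>),
         msgs = msgs c + (case par (loc c u) of None \<Rightarrow> {#} | Some p \<Rightarrow> {#(u, p)#}) \<rparr>"
    using c' cn by simp
qed

lemma ni_fin_nr:
  assumes I: "NI c jr" and s: "step n E r c (Finish u) c'" and ur: "u \<noteq> r"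
  shows "NI c' jr"
proof -
  note F = NI_facts[OF I]
  note G = fin_facts[OF I s]
  have eu: "st (loc c u) = EXPLORE" and wu: "wait (loc c u) = None" and tu: "todo (loc c u) = {}"
    using G by auto
  obtain p where p: "par (loc c u) = Some p" "st (loc c p) = EXPLORE" "wait (loc c p) = Some u"
    using F(16)[OF ur eu] by blast
  have pu: "p \<noteq> u" using p wu by auto
  have M: "msgs c' = {#(u,p)#}" using G(4,6) p by simp
  have X: "\<And>x. x \<noteq> u \<Longrightarrow> loc c' x = loc c x" using G(6) by simp
  have Xu: "loc c' u = (loc c u)\<lparr>st := IDLE\<rparr>" using G(6) by simp
  have rr: "loc c' r = loc c r" using X ur by simp
  have P: "\<And>x. par (loc c' x) = par (loc c x)" "\<And>x. chl (loc c' x) = chl (loc c x)"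
    "\<And>x. cnt (loc c' x) = cnt (loc c x)" "\<And>x. todo (loc c' x) = todo (loc c x)"
    "\<And>x. wait (loc c' x) = wait (loc c x)" "\<And>x. dummy (loc c' x) = dummy (loc c x)"
    by (case_tac "x = u", simp_all add: X Xu)+
  have stX: "\<And>x. st (loc c' x) = (if x = u then IDLE else st (loc c x))" using X Xu by simp
  have du: "dd u + cnt (loc c u) = cnt (loc c r)" using F(10)[OF eu] by simp
  have fr: "\<And>x. fresh c' x \<longleftrightarrow> fresh c x"
  proof -
    fix x show "fresh c' x \<longleftrightarrow> fresh c x"
      by (cases "x = u") (use Xu rr X eu du in \<open>simp_all add: fresh_def\<close>)
  qed
  have fn: "\<And>x. fin c' x \<longleftrightarrow> (fin c x \<or> x = u)"
  proof -
    fix x show "fin c' x \<longleftrightarrow> (fin c x \<or> x = u)"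
      by (cases "x = u") (use Xu rr X eu du in \<open>simp_all add: fin_def\<close>)
  qed
  have ch: "\<And>x w. child c' x w \<longleftrightarrow> child c x w"
    unfolding child_def using P stX eu by auto
  have nb: "\<And>x. st (loc c x) = EXPLORE \<Longrightarrow> wait (loc c x) = None \<Longrightarrow> x = u"
    using F(19) eu wu by blast
  show ?thesis
    unfolding NI_def P
    apply (intro conjI)
    subgoal using F(1) .
    subgoal using rootE[OF I eu] stX[of r] ur by simp
    subgoal apply (intro allI impI) subgoal for x using F(3)[of x] stX[of x] F(3)[of u] eu by (cases "x = u") auto done
    subgoal apply (intro allI impI) subgoal for x using F(4)[of x] stX[of x] eu by (cases "x = u") auto done
    subgoal apply (intro ballI impI) subgoal for x using F(5)[of x] stX[of x] by auto done
    subgoal apply (intro ballI impI) subgoal for x using F(6)[of x] stX[of x] eu by auto done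
    subgoal apply (intro allI) subgoal for x using F(7)[of x] stX[of x] by auto done
    subgoal using F(8) by blast
    subgoal apply (intro allI impI) subgoal for x using F(9)[of x] stX[of x] fr[of x] fn[of x] by (cases "x = u") auto done
    subgoal apply (intro allI impI) subgoal for x using F(10)[of x] stX[of x] by (cases "x = u") auto done
    subgoal apply (intro allI impI) subgoal for x w using F(11)[of x w] stX[of x] ch[of x w] fr[of w] fn[of w] by (cases "x = u") auto done
    subgoal apply (intro allI impI) subgoal for x w using F(12)[of x w] stX[of x] stX[of w] by (cases "x = u") auto done
    subgoal apply (intro allI impI) subgoal for x w using F(13)[of x w] fr[of x] fr[of w] ch[of x w] by auto done
    subgoal apply (intro allI impI) subgoal for x w using F(14)[of x w] F(11)[OF eu, of w] fn[of x] fn[of w] ch[of x w] tu wu by auto done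
    subgoal apply (intro allI impI) subgoal for x w using F(15)[of x w] F(12)[OF eu, of w] fn[of x] stX[of w] tu wu by auto done
    subgoal apply (intro allI impI) subgoal premises Q for x
      proof -
        have xu: "x \<noteq> u" using Q(2) stX[of x] by auto
        obtain q where q: "par (loc c x) = Some q" "st (loc c q) = EXPLORE" "wait (loc c q) = Some x"
          using F(16)[of x] Q(1) Q(2) stX[of x] xu by auto
        have "q \<noteq> u" using q wu by auto
        then show ?thesis using q stX[of q] by auto
      qed done
    subgoal apply (intro allI impI) subgoal for x w using F(17)[of x w] stX[of x] stX[of w] by (auto split: if_splits) done
    subgoal apply (intro allI impI) subgoal for x using nb[of x] stX[of x] by (auto split: if_splits) done
    subgoal apply (intro allI impI) subgoal for x w using nb[of x] stX[of x] by (auto split: if_splits) done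
    subgoal
      proof -
        have "rep c' u p" using p pu stX[of p] stX[of u] fn[of u] by (simp add: rep_def P)
        then show ?thesis using M by blast
      qed
    done
qed

lemma ni_fin_r:
  assumes I: "NI c jr" and s: "step n E r c (Finish r) c'"
  shows "NI c' (Suc jr)"
proof -
  note F = NI_facts[OF I]
  note G = fin_facts[OF I s]
  have eu: "st (loc c r) = EXPLORE" and wu: "wait (loc c r) = None" and tu: "todo (loc c r) = {}"
    using G by auto
  note C = complete[OF I eu wu tu]
  have rE: "Suc jr = cnt (loc c r)" "cnt (loc c r) < n - 1" using rootE[OF I eu] G(5) by auto
  have M: "msgs c' = {#}" using G(4,6) F(1) by simp
  have X: "\<And>x. x \<noteq> r \<Longrightarrow> loc c' x = loc c x" using G(6) by simp
  have Xu: "loc c' r = (loc c r)\<lparr>st := IDLE\<rparr>" using G(6) by simp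
  have P: "\<And>x. par (loc c' x) = par (loc c x)" "\<And>x. chl (loc c' x) = chl (loc c x)"
    "\<And>x. cnt (loc c' x) = cnt (loc c x)" "\<And>x. todo (loc c' x) = todo (loc c x)"
    "\<And>x. wait (loc c' x) = wait (loc c x)" "\<And>x. dummy (loc c' x) = dummy (loc c x)"
    by (case_tac "x = r", simp_all add: X Xu)+
  have stX: "\<And>x. st (loc c' x) = (if x = r then IDLE else st (loc c x))" using X Xu by simp
  have fn: "\<And>x. fin c' x \<longleftrightarrow> (fin c x \<or> x = r)"
  proof -
    fix x show "fin c' x \<longleftrightarrow> (fin c x \<or> x = r)"
      by (cases "x = r") (use Xu X in \<open>simp_all add: fin_def\<close>)
  qed
  have allfin: "\<And>x. st (loc c' x) \<noteq> INIT \<Longrightarrow> fin c' x"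
    using C(1) fn stX by (metis)
  have noE: "\<And>x. st (loc c' x) \<noteq> EXPLORE"
  proof -
    fix x show "st (loc c' x) \<noteq> EXPLORE" using allfin[of x] unfolding fin_def by (cases "st (loc c' x)") auto
  qed
  have nofr: "\<And>x. \<not> fresh c' x"
    using allfin unfolding fin_def fresh_def by fastforce
  have ch: "\<And>x w. child c' x w \<longleftrightarrow> child c x w"
    unfolding child_def using P stX eu by auto
  show ?thesis
    unfolding NI_def P
    apply (intro conjI)
    subgoal using F(1) .
    subgoal using rE stX[of r] M allfin by auto
    subgoal apply (intro allI impI) subgoal for x using F(3)[of x] stX[of x] rV by (cases "x = r") auto done
    subgoal apply (intro allI impI) subgoal for x using F(4)[of x] stX[of x] by auto done
    subgoal apply (intro ballI impI) subgoal for x using C(2)[of x] rE stX[of x] by auto done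
    subgoal apply (intro ballI impI) subgoal for x using F(6)[of x] stX[of x] by auto done
    subgoal apply (intro allI) subgoal for x using F(7)[of x] stX[of x] by auto done
    subgoal using F(8) by blast
    subgoal apply (intro allI impI) subgoal for x using allfin[of x] by auto done
    subgoal using noE by blast
    subgoal using noE by blast
    subgoal using noE by blast
    subgoal using nofr by blast
    subgoal apply (intro allI impI) subgoal for x w using ch[of x w] C(1)[of w] fn[of w] F(1) by (auto simp: child_def) done
    subgoal apply (intro allI impI) subgoal for x w using C(2)[of w] edgeV[of x w] stX[of w] by auto done
    subgoal using noE by blast
    subgoal using noE by blast
    subgoal using noE by blast
    subgoal using noE by blast
    subgoal using M by blast
    done
qed

lemma ni_rs:
  assumes I: "NI c jr" and s: "step n E r c (RootStart x0) c'"
  shows "NI c' jr"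
proof -
  note F = NI_facts[OF I]
  from s have ir: "st (loc c r) = IDLE"
    and c': "c' = \<lparr> loc = (loc c)(r := (loc c r)\<lparr>st := EXPLORE, cnt := Suc (cnt (loc c r)),
                                      todo := nbrs E r, wait := None, dummy := False\<rparr>),
         msgs = msgs c \<rparr>"
    by (cases rule: step.cases; simp)+
  have R: "jr = cnt (loc c r)" "jr < n - 1" "msgs c = {#}" "\<And>u. st (loc c u) \<noteq> INIT \<Longrightarrow> fin c u"
    using F(2) ir by auto
  have M: "msgs c' = {#}" using c' R by simp
  have X: "\<And>x. x \<noteq> r \<Longrightarrow> loc c' x = loc c x" using c' by simp
  have Xu: "loc c' r = (loc c r)\<lparr>st := EXPLORE, cnt := Suc (cnt (loc c r)),
                                      todo := nbrs E r, wait := None, dummy := False\<rparr>" using c' by simp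
  have P: "\<And>x. par (loc c' x) = par (loc c x)" "\<And>x. chl (loc c' x) = chl (loc c x)"
    by (case_tac "x = r", simp_all add: X Xu)+
  have stX: "\<And>x. st (loc c' x) = (if x = r then EXPLORE else st (loc c x))" using X Xu by simp
  have noE: "\<And>x. st (loc c x) \<noteq> EXPLORE"
  proof -
    fix x show "st (loc c x) \<noteq> EXPLORE" using R(4)[of x] unfolding fin_def by (cases "st (loc c x)") auto
  qed
  have fr: "\<And>x. fresh c' x \<longleftrightarrow> (x \<noteq> r \<and> fin c x)"
  proof -
    fix x show "fresh c' x \<longleftrightarrow> (x \<noteq> r \<and> fin c x)"
      by (cases "x = r") (use Xu X in \<open>simp_all add: fresh_def fin_def\<close>)
  qed
  have fn: "\<And>x. \<not> fin c' x"
  proof -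
    fix x show "\<not> fin c' x"
    proof (cases "x = r")
      case True then show ?thesis using Xu by (simp add: fin_def)
    next
      case False
      then show ?thesis using R(4)[of x] X[OF False] Xu by (auto simp: fin_def)
    qed
  qed
  have ch: "\<And>x w. child c' x w \<longleftrightarrow> child c x w"
    unfolding child_def using P stX ir by auto
  show ?thesis
    unfolding NI_def P
    apply (intro conjI)
    subgoal using F(1) .
    subgoal using Xu R by auto
    subgoal apply (intro allI impI) subgoal for x using F(3)[of x] stX[of x] rV by (cases "x = r") auto done
    subgoal apply (intro allI impI) subgoal for x using F(4)[of x] stX[of x] by auto done
    subgoal apply (intro ballI impI) subgoal for x using F(5)[of x] stX[of x] by auto done
    subgoal apply (intro ballI impI) subgoal for x using F(6)[of x] stX[of x] Xu by auto done
    subgoal apply (intro allI) subgoal for x using F(7)[of x] stX[of x] by auto done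
    subgoal using F(8) by blast
    subgoal apply (intro allI impI) subgoal for x using R(4)[of x] stX[of x] fr[of x] by auto done
    subgoal apply (intro allI impI) subgoal for x using Xu stX[of x] noE[of x] F(1) by (cases "x = r") (auto simp: nbrs_def) done
    subgoal apply (intro allI impI) subgoal premises Q for x w
      proof -
        have xr: "x = r" using Q(1) stX[of x] noE[of x] by (auto split: if_splits)
        have cw: "child c r w" using Q(2) ch xr by simp
        have wr: "w \<noteq> r" using cw F(1) by (auto simp: child_def)
        have "(w,r) \<in> E" using F(4)[OF wr] cw by (auto simp: child_def)
        then have wn: "w \<in> nbrs E r" using edge_sym by (auto simp: nbrs_def)
        have "fresh c' w" using fr[of w] wr R(4)[of w] cw by (auto simp: child_def)
        then show ?thesis using xr wn Xu by auto
      qed done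
    subgoal apply (intro allI impI) subgoal for x w using stX[of x] noE[of x] Xu by (auto simp: nbrs_def split: if_splits) done
    subgoal apply (intro allI impI) subgoal for x w using fr[of x] fr[of w] ch[of x w] F(14)[of x w] F(1) by (auto simp: child_def) done
    subgoal using fn by blast
    subgoal using fn by blast
    subgoal apply (intro allI impI) subgoal for x using stX[of x] noE[of x] by auto done
    subgoal apply (intro allI impI) subgoal for x w using stX[of x] stX[of w] noE[of x] noE[of w] by (auto split: if_splits) done
    subgoal using M by blast
    subgoal apply (intro allI impI) subgoal for x w using stX[of x] stX[of w] noE[of x] noE[of w] by (auto split: if_splits) done
    subgoal using M by blast
    done
qed

lemma ni_sd:
  assumes I: "NI c jr" and s: "step n E r c (StartDummy u) c'"
  shows "CI c' jr"
proof -
  note F = NI_facts[OF I]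
  from s have eu: "st (loc c u) = EXPLORE" and wu: "wait (loc c u) = None" and tu: "todo (loc c u) = {}"
    and cu: "cnt (loc c u) = n - 1"
    and c': "c' = \<lparr> loc = (loc c)(u := (loc c u)\<lparr>dummy := True, todo := chl (loc c u)\<rparr>),
         msgs = msgs c \<rparr>"
    by (cases rule: step.cases; simp)+
  have rE: "st (loc c r) = EXPLORE" "Suc jr = cnt (loc c r)" "cnt (loc c r) \<le> n - 1" using rootE[OF I eu] by auto
  have ur: "u = r"
  proof (rule ccontr)
    assume ur: "u \<noteq> r"
    have uV: "u \<in> V" using F(3) eu by auto
    have "dd u \<noteq> 0" using dd0[OF uV] ur by auto
    then show False using F(10)[OF eu] cu rE(3) n2 by auto
  qed
  note C = complete[OF I eu[unfolded ur] wu[unfolded ur] tu[unfolded ur]]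
  have ms: "msgs c = {#}" using F(18) eu wu by blast
  have X: "\<And>x. x \<noteq> r \<Longrightarrow> loc c' x = loc c x" using c' ur by simp
  have Xu: "loc c' r = (loc c r)\<lparr>dummy := True, todo := chl (loc c r)\<rparr>" using c' ur by simp
  have P: "\<And>x. par (loc c' x) = par (loc c x)" "\<And>x. chl (loc c' x) = chl (loc c x)"
    "\<And>x. cnt (loc c' x) = cnt (loc c x)" "\<And>x. st (loc c' x) = st (loc c x)"
    by (case_tac "x = r", simp_all add: X Xu)+
  have T: "\<And>x. todo (loc c' x) = (if x = r then chl (loc c r) else todo (loc c x))" using X Xu by simp
  show ?thesis
    unfolding CI_def P
    apply (intro conjI)
    subgoal using F(1) .
    subgoal using cu ur by simp
    subgoal using rE cu ur by simp
    subgoal using F(3) by blast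
    subgoal apply (intro ballI) subgoal for x using C(2)[of x] dd_less[of x] cu ur by auto done
    subgoal using F(4) by blast
    subgoal apply (intro allI impI) subgoal for x using F(10)[of x] F(8)[of r] T[of x] by auto done
    subgoal using F(8) by blast
    subgoal using c' ms by simp
    done
qed

lemma CI_facts: assumes "CI c jr" shows
  "par (loc c r) = None"
  "cnt (loc c r) = n - 1"
  "(st (loc c r) = EXPLORE \<and> Suc jr = n - 1) \<or> (st (loc c r) = DONE \<and> jr = n - 1)"
  "\<And>u. st (loc c u) \<noteq> INIT \<Longrightarrow> u \<in> V"
  "\<And>u. u\<in>V \<Longrightarrow> st (loc c u) \<noteq> INIT"
  "\<And>u. u \<noteq> r \<Longrightarrow> st (loc c u) \<noteq> INIT \<Longrightarrow> (\<exists>p. par (loc c u) = Some p \<and> (u,p) \<in> E \<and> Suc (dd p) = dd u)"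
  "\<And>u. st (loc c u) = EXPLORE \<Longrightarrow> todo (loc c u) \<subseteq> nbrs E u"
  "\<And>u. chl (loc c u) \<subseteq> nbrs E u"
  "\<And>x. x \<in># msgs c \<Longrightarrow> x \<in> E"
  using assms unfolding CI_def by blast+

lemma ci_step:
  assumes I: "CI c jr" and s: "step n E r c a c'"
  shows "CI c' (if a = Finish r then Suc jr else jr)"
  using s
proof (cases rule: step.cases)
  case (set_parent v u)
  note F = CI_facts[OF I]
  have "(v,u) \<in> E" using F(9) set_parent by blast
  then have "u \<in> V" using edgeV by blast
  then show ?thesis using F(5) set_parent by blast
next
  case (mark_sibling v u)
  note F = CI_facts[OF I]
  have e: "(u,v) \<in> E" using F(9) mark_sibling edge_sym by blast
  show ?thesis unfolding CI_def using mark_sibling F e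
    apply (intro conjI)
    apply (auto simp: nbrs_def dest: in_diffD)
    apply (fastforce+)?
    done
next
  case (explore_start v u)
  note F = CI_facts[OF I]
  have ur: "u \<noteq> r" using F(1) explore_start by auto
  show ?thesis unfolding CI_def using explore_start F ur
    apply (intro conjI)
    apply (auto simp: nbrs_def dest: in_diffD)
    apply (fastforce+)?
    done
next
  case root_start
  note F = CI_facts[OF I]
  then show ?thesis using root_start by auto
next
  case (send_next u v)
  note F = CI_facts[OF I]
  have e: "(u,v) \<in> E" using F(7) send_next by (auto simp: nbrs_def)
  show ?thesis unfolding CI_def using send_next F e
    apply (intro conjI)
    apply (auto simp: nbrs_def)
    apply (fastforce+)?
    done
next
  case (recv_reply v u)
  note F = CI_facts[OF I]
  show ?thesis unfolding CI_def using recv_reply F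
    apply (intro conjI)
    apply (auto simp: nbrs_def dest: in_diffD)
    apply (fastforce+)?
    done
next
  case (start_dummy u)
  note F = CI_facts[OF I]
  show ?thesis unfolding CI_def using start_dummy F
    apply (intro conjI)
    apply (auto simp: nbrs_def)
    apply (fastforce+)?
    done
next
  case (finish u)
  note F = CI_facts[OF I]
  show ?thesis
  proof (cases "u = r")
    case True
    then show ?thesis unfolding CI_def using finish F
      apply (intro conjI)
      apply (auto simp: nbrs_def)
      apply (fastforce+)?
      done
  next
    case False
    obtain p where p: "par (loc c u) = Some p" "(u,p) \<in> E" using F(6)[OF False] finish by auto
    show ?thesis unfolding CI_def using finish F False p
      apply (intro conjI)
      apply (auto simp: nbrs_def)
      apply (fastforce+)?
      done
  qed
qed

lemma NI_init: "NI (init_config E r) 0"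
  using n2 rV dd0 unfolding NI_def init_config_def fin_def fresh_def child_def
  by (auto simp: nbrs_def)


lemma run_inv: "run (card V) E r c jr \<Longrightarrow> NI c jr \<or> CI c jr"
proof (induction rule: run.induct)
  case run_init
  then show ?case using NI_init by blast
next
  case (run_step c j a c')
  show ?case
  proof (cases "CI c j")
    case True
    then show ?thesis using ci_step run_step.hyps(2) by blast
  next
    case False
    then have I: "NI c j" using run_step.IH by blast
    show ?thesis
    proof (cases a)
      case (SetParent v u) then show ?thesis using ni_sp[OF I] run_step.hyps(2) by simp
    next
      case (MarkSibling v u) then show ?thesis using ni_ms[OF I] run_step.hyps(2) by simp
    next
      case (ExploreStart v u) then show ?thesis using ni_es[OF I] run_step.hyps(2) by simp
    next
      case (RootStart x) then show ?thesis using ni_rs[OF I] run_step.hyps(2) by simp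
    next
      case (SendNext u v) then show ?thesis using ni_sn[OF I] run_step.hyps(2) by simp
    next
      case (RecvReply v u) then show ?thesis using ni_rr[OF I] run_step.hyps(2) by simp
    next
      case (StartDummy u) then show ?thesis using ni_sd[OF I] run_step.hyps(2) by simp
    next
      case (Finish u)
      show ?thesis
      proof (cases "u = r")
        case True then show ?thesis using ni_fin_r[OF I] run_step.hyps(2) Finish by simp
      next
        case False then show ?thesis using ni_fin_nr[OF I] run_step.hyps(2) Finish by simp
      qed
    qed
  qed
qed

lemma final:
  assumes k: "k \<ge> 1" and R: "run (card V) E r c (k - 1)" and s: "step (card V) E r c (Finish r) c'"
  shows "(\<forall>u\<in>V. dd u = k \<longrightarrow>
             (\<exists>p. par (loc c' u) = Some p \<and> (u, p) \<in> E \<and> dd p = k - 1)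
             \<and> st (loc c' u) \<noteq> INIT)
       \<and> (\<forall>u\<in>V. dd u > k \<longrightarrow> st (loc c' u) = INIT)"
proof -
  from s have er: "st (loc c r) = EXPLORE" and wr: "wait (loc c r) = None" and tr: "todo (loc c r) = {}"
    and c': "c' = \<lparr> loc = (loc c)(r := (loc c r)\<lparr>st := (if cnt (loc c r) = n - 1 then DONE else IDLE)\<rparr>),
         msgs = msgs c + (case par (loc c r) of None \<Rightarrow> {#} | Some p \<Rightarrow> {#(r, p)#}) \<rparr>"
    by (cases rule: step.cases; simp)+
  have lx: "\<And>x. x \<noteq> r \<Longrightarrow> loc c' x = loc c x" using c' by simp
  have ur: "\<And>u. dd u \<ge> k \<Longrightarrow> u \<noteq> r" using k by auto
  show ?thesis
  proof (cases "NI c (k - 1)")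
    case True
    note I = True
    note F = NI_facts[OF I]
    note C = complete[OF I er wr tr]
    have ck: "cnt (loc c r) = k" using rootE[OF I er] k by auto
    have A: "\<forall>u\<in>V. dd u = k \<longrightarrow>
             (\<exists>p. par (loc c' u) = Some p \<and> (u, p) \<in> E \<and> dd p = k - 1)
             \<and> st (loc c' u) \<noteq> INIT"
    proof (intro ballI impI)
      fix u assume u: "u \<in> V" "dd u = k"
      have ne: "st (loc c u) \<noteq> INIT" using C(2)[OF u(1)] u ck by simp
      obtain p where p: "par (loc c u) = Some p" "(u,p) \<in> E" "Suc (dd p) = dd u"
        using F(4)[OF ur[of u] ne] u by auto
      show "(\<exists>p. par (loc c' u) = Some p \<and> (u, p) \<in> E \<and> dd p = k - 1) \<and> st (loc c' u) \<noteq> INIT"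
        using p ne lx[OF ur[of u]] u by auto
    qed
    have B: "\<forall>u\<in>V. dd u > k \<longrightarrow> st (loc c' u) = INIT"
    proof (intro ballI impI)
      fix u assume u: "u \<in> V" "k < dd u"
      show "st (loc c' u) = INIT" using F(6)[OF u(1)] u ck lx[OF ur[of u]] by auto
    qed
    show ?thesis using A B by blast
  next
    case False
    then have I: "CI c (k - 1)" using run_inv[OF R] by blast
    note F = CI_facts[OF I]
    have kn: "k = n - 1" using F(3) er k by auto
    have A: "\<forall>u\<in>V. dd u = k \<longrightarrow>
             (\<exists>p. par (loc c' u) = Some p \<and> (u, p) \<in> E \<and> dd p = k - 1)
             \<and> st (loc c' u) \<noteq> INIT"
    proof (intro ballI impI)
      fix u assume u: "u \<in> V" "dd u = k"
      have ne: "st (loc c u) \<noteq> INIT" using F(5)[OF u(1)] .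
      obtain p where p: "par (loc c u) = Some p" "(u,p) \<in> E" "Suc (dd p) = dd u"
        using F(6)[OF ur[of u] ne] u by auto
      show "(\<exists>p. par (loc c' u) = Some p \<and> (u, p) \<in> E \<and> dd p = k - 1) \<and> st (loc c' u) \<noteq> INIT"
        using p ne lx[OF ur[of u]] u by auto
    qed
    have B: "\<forall>u\<in>V. dd u > k \<longrightarrow> st (loc c' u) = INIT"
    proof (intro ballI impI)
      fix u assume u: "u \<in> V" "k < dd u"
      then show "st (loc c' u) = INIT" using dd_less[OF u(1)] kn by auto
    qed
    show ?thesis using A B by blast
  qed
qed

end

theorem mainTheorem6:
  fixes V :: "'v set" and E :: "('v \<times> 'v) set" and r :: 'v
    and c c' :: "'v config" and k :: nat
  assumes "connected_graph V E"
    and "r \<in> V"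
    and "k \<ge> 1"
    and "run (card V) E r c (k - 1)"
    and "step (card V) E r c (Finish r) c'"
  shows "(\<forall>u\<in>V. graph_dist E r u = k \<longrightarrow>
             (\<exists>p. par (loc c' u) = Some p \<and> (u, p) \<in> E \<and> graph_dist E r p = k - 1)
             \<and> st (loc c' u) \<noteq> INIT)
       \<and> (\<forall>u\<in>V. graph_dist E r u > k \<longrightarrow> st (loc c' u) = INIT)"
proof (cases "2 \<le> card V")
  case True
  interpret bfs2 V E r using assms(1,2) True by unfold_locales auto
  show ?thesis using final[OF assms(3) assms(4) assms(5)] by simp
next
  case False
  have fin: "finite V" using assms(1) by (simp add: connected_graph_def)
  have "card V \<le> Suc 0" using False by simp
  then have "\<forall>a\<in>V. \<forall>b\<in>V. a = b" using card_le_Suc0_iff_eq[OF fin] by blast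
  then have Vr: "\<And>u. u \<in> V \<Longrightarrow> u = r" using assms(2) by blast
  have "graph_dist E r r = 0" by (simp add: graph_dist_def)
  then show ?thesis using Vr assms(3) by auto
qed

end
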